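(* There is an absolute constant $C>0$ such that for every instance with capacities $c_i\ge1$ and $c_{\min}=\min_{i\in I}c_i\ge2$, $$\mathrm{OPT}(\mathrm{LP})\Big(1-C\sqrt{\tfrac{\log c_{\min}}{c_{\min}}}\Big)\ \le\ \mathrm{OPT}(\mathrm{PBP})\ \le\ \mathrm{OPT}(\mathrm{LP}).$$ In particular $\mathrm{OPT}(\mathrm{PBP})/\mathrm{OPT}(\mathrm{LP})\to1$ as $c_{\min}\to\infty$.
   Context: Instance: bipartite graph $G=(I,T,E)$, rewards $r_i>0$ and integer capacities $c_i\ge1$ for $i\in I$, arrivals $t\in T$ ordered $1,2,\dots$, edge probabilities $p_{it}\in[0,1]$. Expectation LP: maximize $\sum_{(i,t)\in E}p_{it}r_ix_{it}$ subject to $\sum_tp_{it}x_{it}\le c_i$ for all $i$, $\sum_ix_{it}\le1$ for all $t$, $0\le x_{it}\le1$; its optimum is $\mathrm{OPT}(\mathrm{LP})$. Sample paths: $\omega$ assigns each edge an outcome $\mathbb{1}^\omega(i,t)\in\{0,1\}$, independent Bernoulli($p_{it}$); $\Omega$ is the set of all paths; $\omega_{t}$ is the restriction of $\omega$ to edges incident to arrivals $t'\le t$. PBP: variables $x^\omega_{it}\in[0,1]$; maximize $E_\omega\big[\sum_{(i,t)\in E}r_ix^\omega_{it}\mathbb{1}^\omega(i,t)\big]$ subject to $\sum_tx^\omega_{it}\mathbb{1}^\omega(i,t)\le c_i$ for all $i,\omega$; $\sum_ix^\omega_{it}\le1$ for all $t,\omega$; $x^\omega_{it}=x^{\omega'}_{it}$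 whenever $\omega_{t-1}=\omega'_{t-1}$. Its optimum is $\mathrm{OPT}(\mathrm{PBP})$. *)

theory Defs
  imports "HOL-Probability.Probability"
begin

text \<open>Instance: offline nodes I (a finite set of naturals), arrivals {1..n} in order,
  edges E \<subseteq> I \<times> {1..n}, rewards r, capacities c, edge probabilities p.\<close>

definition LP_feasible ::
  "nat set \<Rightarrow> nat \<Rightarrow> (nat \<times> nat) set \<Rightarrow> (nat \<Rightarrow> nat \<Rightarrow> real) \<Rightarrow> (nat \<Rightarrow> nat)
   \<Rightarrow> (nat \<Rightarrow> nat \<Rightarrow> real) \<Rightarrow> bool" where
  "LP_feasible I n E p c x \<longleftrightarrow>
     (\<forall>i\<in>I. (\<Sum>t\<in>{t. (i,t) \<in> E}. p i t * x i t) \<le> real (c i)) \<and>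
     (\<forall>t\<in>{1..n}. (\<Sum>i\<in>{i. (i,t) \<in> E}. x i t) \<le> 1) \<and>
     (\<forall>(i,t)\<in>E. 0 \<le> x i t \<and> x i t \<le> 1)"

definition LP_obj ::
  "(nat \<times> nat) set \<Rightarrow> (nat \<Rightarrow> nat \<Rightarrow> real) \<Rightarrow> (nat \<Rightarrow> real) \<Rightarrow> (nat \<Rightarrow> nat \<Rightarrow> real) \<Rightarrow> real" where
  "LP_obj E p r x = (\<Sum>(i,t)\<in>E. p i t * r i * x i t)"

definition OPT_LP ::
  "nat set \<Rightarrow> nat \<Rightarrow> (nat \<times> nat) set \<Rightarrow> (nat \<Rightarrow> real) \<Rightarrow> (nat \<Rightarrow> nat)
   \<Rightarrow> (nat \<Rightarrow> nat \<Rightarrow> real) \<Rightarrow> real" where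
  "OPT_LP I n E r c p = Sup (LP_obj E p r ` {x. LP_feasible I n E p c x})"

definition sample_paths :: "(nat \<times> nat) set \<Rightarrow> (nat \<times> nat \<Rightarrow> bool) set" where
  "sample_paths E = {\<omega>. \<forall>e. e \<notin> E \<longrightarrow> \<not> \<omega> e}"

definition path_pmf :: "(nat \<times> nat) set \<Rightarrow> (nat \<Rightarrow> nat \<Rightarrow> real) \<Rightarrow> (nat \<times> nat \<Rightarrow> bool) pmf" where
  "path_pmf E p = Pi_pmf E False (\<lambda>(i,t). bernoulli_pmf (p i t))"

definition ind :: "bool \<Rightarrow> real" where
  "ind b = (if b then 1 else 0)"

definition PBP_feasible ::
  "nat set \<Rightarrow> nat \<Rightarrow> (nat \<times> nat) set \<Rightarrow> (nat \<Rightarrow> nat)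
   \<Rightarrow> ((nat \<times> nat \<Rightarrow> bool) \<Rightarrow> nat \<Rightarrow> nat \<Rightarrow> real) \<Rightarrow> bool" where
  "PBP_feasible I n E c x \<longleftrightarrow>
     (\<forall>\<omega>\<in>sample_paths E.
        (\<forall>i\<in>I. (\<Sum>t\<in>{t. (i,t) \<in> E}. x \<omega> i t * ind (\<omega> (i,t))) \<le> real (c i)) \<and>
        (\<forall>t\<in>{1..n}. (\<Sum>i\<in>{i. (i,t) \<in> E}. x \<omega> i t) \<le> 1) \<and>
        (\<forall>(i,t)\<in>E. 0 \<le> x \<omega> i t \<and> x \<omega> i t \<le> 1)) \<and>
     (\<forall>\<omega>\<in>sample_paths E. \<forall>\<omega>'\<in>sample_paths E. \<forall>(i,t)\<in>E.
        (\<forall>(j,s)\<in>E. s \<le> t - 1 \<longrightarrow> \<omega> (j,s) = \<omega>' (j,s)) \<longrightarrow> x \<omega> i t = x \<omega>' i t)"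

definition PBP_obj ::
  "(nat \<times> nat) set \<Rightarrow> (nat \<Rightarrow> real) \<Rightarrow> (nat \<Rightarrow> nat \<Rightarrow> real)
   \<Rightarrow> ((nat \<times> nat \<Rightarrow> bool) \<Rightarrow> nat \<Rightarrow> nat \<Rightarrow> real) \<Rightarrow> real" where
  "PBP_obj E r p x = measure_pmf.expectation (path_pmf E p)
      (\<lambda>\<omega>. \<Sum>(i,t)\<in>E. r i * x \<omega> i t * ind (\<omega> (i,t)))"

definition OPT_PBP ::
  "nat set \<Rightarrow> nat \<Rightarrow> (nat \<times> nat) set \<Rightarrow> (nat \<Rightarrow> real) \<Rightarrow> (nat \<Rightarrow> nat)
   \<Rightarrow> (nat \<Rightarrow> nat \<Rightarrow> real) \<Rightarrow> real" where
  "OPT_PBP I n E r c p = Sup (PBP_obj E r p ` {x. PBP_feasible I n E c x})"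

end

theory Submission imports Defs begin

lemma finite_set_path_pmf:
  assumes "finite E" shows "finite (set_pmf (path_pmf E p))"
proof -
  have "finite (set_pmf (Pi_pmf E False (\<lambda>(i,t). bernoulli_pmf (p i t))))"
    by (rule finite_subset[OF set_Pi_pmf_subset'[OF assms]]) (rule finite_PiE_dflt[OF assms], simp)
  then show ?thesis by (simp add: path_pmf_def)
qed

lemma set_path_pmf_sub:
  assumes "finite E" shows "set_pmf (path_pmf E p) \<subseteq> sample_paths E"
proof -
  have "set_pmf (Pi_pmf E False (\<lambda>(i,t). bernoulli_pmf (p i t))) \<subseteq> sample_paths E"
    using set_Pi_pmf_subset[OF assms, of False] unfolding sample_paths_def by blast
  then show ?thesis by (simp add: path_pmf_def)
qed

lemma expect_pair_prod:
  fixes h :: "'a \<Rightarrow> real" and k :: "'b \<Rightarrow> real"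
  assumes "finite (set_pmf M)" "finite (set_pmf N)"
  shows "measure_pmf.expectation (pair_pmf M N) (\<lambda>x. h (fst x) * k (snd x))
     = measure_pmf.expectation M h * measure_pmf.expectation N k"
proof -
  have "measure_pmf.expectation (pair_pmf M N) (\<lambda>x. h (fst x) * k (snd x))
      = (\<Sum>a\<in>set_pmf M \<times> set_pmf N. pmf (pair_pmf M N) a *\<^sub>R (h (fst a) * k (snd a)))"
    using assms by (intro integral_measure_pmf) auto
  also have "\<dots> = (\<Sum>(a,b)\<in>set_pmf M \<times> set_pmf N. (pmf M a * h a) * (pmf N b * k b))"
    by (intro sum.cong refl) (clarsimp simp: pmf_pair)
  also have "\<dots> = (\<Sum>a\<in>set_pmf M. \<Sum>b\<in>set_pmf N. (pmf M a * h a) * (pmf N b * k b))"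
    by (simp add: sum.cartesian_product)
  also have "\<dots> = (\<Sum>a\<in>set_pmf M. pmf M a * h a) * (\<Sum>b\<in>set_pmf N. pmf N b * k b)"
    by (simp add: sum_product)
  also have "(\<Sum>a\<in>set_pmf M. pmf M a * h a) = measure_pmf.expectation M h"
    using assms by (subst integral_measure_pmf[of "set_pmf M"]) auto
  also have "(\<Sum>b\<in>set_pmf N. pmf N b * k b) = measure_pmf.expectation N k"
    using assms by (subst integral_measure_pmf[of "set_pmf N"]) auto
  finally show ?thesis .
qed

lemma pmf_integral_cong:
  fixes f g :: "'a \<Rightarrow> real"
  assumes "\<And>x. x \<in> set_pmf M \<Longrightarrow> f x = g x"
  shows "measure_pmf.expectation M f = measure_pmf.expectation M g"
  by (rule integral_cong_AE) (simp_all add: AE_measure_pmf_iff assms)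

lemma expect_ind:
  assumes fin: "finite E" and e: "(i,t) \<in> E" and p: "0 \<le> p i t" "p i t \<le> 1"
    and g: "\<And>\<omega> b. \<omega> \<in> sample_paths E \<Longrightarrow> g (fun_upd \<omega> (i,t) b) = g \<omega>"
  shows "measure_pmf.expectation (path_pmf E p) (\<lambda>\<omega>. g \<omega> * ind (\<omega> (i,t)))
       = p i t * measure_pmf.expectation (path_pmf E p) g"
proof -
  define A where "A = E - {(i,t)}"
  define Q where "Q = (\<lambda>(i,t). bernoulli_pmf (p i t))"
  have finA: "finite A" using fin by (simp add: A_def)
  have EA: "E = insert (i,t) A" "(i,t) \<notin> A" using e by (auto simp: A_def)
  have dec: "path_pmf E p = map_pmf (\<lambda>(y,f). fun_upd f (i,t) y) (pair_pmf (bernoulli_pmf (p i t)) (Pi_pmf A False Q))"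
  proof -
    have "path_pmf E p = Pi_pmf E False Q" by (simp add: path_pmf_def Q_def)
    also have "\<dots> = map_pmf (\<lambda>(y,f). fun_upd f (i,t) y) (pair_pmf (Q (i,t)) (Pi_pmf A False Q))"
      unfolding EA(1) by (rule Pi_pmf_insert[OF finA EA(2)])
    also have "Q (i,t) = bernoulli_pmf (p i t)" by (simp add: Q_def)
    finally show ?thesis .
  qed
  have finB: "finite (set_pmf (bernoulli_pmf (p i t)))" by (rule finite_subset[of _ UNIV]) auto
  have finP: "finite (set_pmf (Pi_pmf A False Q))" 
    by (rule finite_subset[OF set_Pi_pmf_subset'[OF finA]]) (rule finite_PiE_dflt[OF finA], simp)
  have key: "g (fun_upd f (i,t) y) = g f" if "f \<in> set_pmf (Pi_pmf A False Q)" for f y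
  proof -
    have f0: "\<forall>x. x \<notin> A \<longrightarrow> f x = False" using set_Pi_pmf_subset[OF finA, of False Q] that by blast
    have "fun_upd f (i,t) y \<in> sample_paths E" using f0 EA by (auto simp: sample_paths_def)
    from g[OF this, of False] have "g (fun_upd f (i,t) y) = g (fun_upd f (i,t) False)" by simp
    also have "fun_upd f (i,t) False = f" using f0 EA(2) by (auto simp: fun_eq_iff)
    finally show ?thesis .
  qed
  have "measure_pmf.expectation (path_pmf E p) (\<lambda>\<omega>. g \<omega> * ind (\<omega> (i,t)))
     = measure_pmf.expectation (pair_pmf (bernoulli_pmf (p i t)) (Pi_pmf A False Q))
         (\<lambda>x. ind (fst x) * g (snd x))"
    unfolding dec integral_map_pmf
    by (rule pmf_integral_cong) (auto simp: key)
  also have "\<dots> = p i t * measure_pmf.expectation (Pi_pmf A False Q) g"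
    using p by (subst expect_pair_prod[OF finB finP]) (simp add: ind_def)
  also have "measure_pmf.expectation (Pi_pmf A False Q) g = measure_pmf.expectation (path_pmf E p) g"
  proof -
    have "measure_pmf.expectation (path_pmf E p) g
        = measure_pmf.expectation (pair_pmf (bernoulli_pmf (p i t)) (Pi_pmf A False Q)) (\<lambda>x. g (snd x))"
      unfolding dec integral_map_pmf
      by (rule pmf_integral_cong) (auto simp: key)
    then show ?thesis by simp
  qed
  finally show ?thesis .
qed

lemma pmf_mono:
  fixes f g :: "'a \<Rightarrow> real"
  assumes "finite (set_pmf M)" "\<And>x. x \<in> set_pmf M \<Longrightarrow> f x \<le> g x"
  shows "measure_pmf.expectation M f \<le> measure_pmf.expectation M g"
  by (rule integral_mono_AE) (simp_all add: integrable_measure_pmf_finite assms AE_measure_pmf_iff)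

lemma pmf_sum:
  fixes f :: "'b \<Rightarrow> 'a \<Rightarrow> real"
  assumes "finite (set_pmf M)"
  shows "measure_pmf.expectation M (\<lambda>x. \<Sum>i\<in>A. f i x) = (\<Sum>i\<in>A. measure_pmf.expectation M (f i))"
  using assms by (simp add: integrable_measure_pmf_finite)

lemma pmf_const_le:
  fixes f :: "'a \<Rightarrow> real"
  assumes "finite (set_pmf M)" "\<And>x. x \<in> set_pmf M \<Longrightarrow> f x \<le> a"
  shows "measure_pmf.expectation M f \<le> a"
  using pmf_mono[OF assms(1), of f "\<lambda>_. a"] assms(2) by simp

lemma pmf_const_ge:
  fixes f :: "'a \<Rightarrow> real"
  assumes "finite (set_pmf M)" "\<And>x. x \<in> set_pmf M \<Longrightarrow> a \<le> f x"
  shows "a \<le> measure_pmf.expectation M f"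
  using pmf_mono[OF assms(1), of "\<lambda>_. a" f] assms(2) by simp

lemma PBP_feasD1: "PBP_feasible I n E c x \<Longrightarrow> \<omega> \<in> sample_paths E \<Longrightarrow> i \<in> I \<Longrightarrow>
   (\<Sum>t\<in>{t. (i,t) \<in> E}. x \<omega> i t * ind (\<omega> (i,t))) \<le> real (c i)"
  unfolding PBP_feasible_def
  apply (drule conjunct1)
  apply (drule bspec, assumption)
  apply (drule conjunct1)
  apply (drule bspec, assumption)
  apply assumption
  done
lemma PBP_feasD2: "PBP_feasible I n E c x \<Longrightarrow> \<omega> \<in> sample_paths E \<Longrightarrow> t \<in> {1..n} \<Longrightarrow>
   (\<Sum>i\<in>{i. (i,t) \<in> E}. x \<omega> i t) \<le> 1"
  unfolding PBP_feasible_def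
  apply (drule conjunct1)
  apply (drule bspec, assumption)
  apply (drule conjunct2)
  apply (drule conjunct1)
  apply (drule bspec, assumption)
  apply assumption
  done
lemma PBP_feasD3: "PBP_feasible I n E c x \<Longrightarrow> \<omega> \<in> sample_paths E \<Longrightarrow> (i,t) \<in> E \<Longrightarrow>
   0 \<le> x \<omega> i t \<and> x \<omega> i t \<le> 1"
  unfolding PBP_feasible_def
  apply (drule conjunct1)
  apply (drule bspec, assumption)
  apply (drule conjunct2)
  apply (drule conjunct2)
  apply (drule bspec, assumption)
  apply simp
  done
lemma PBP_feasD4:
  assumes F: "PBP_feasible I n E c x" and a: "\<omega> \<in> sample_paths E" "\<omega>' \<in> sample_paths E" "(i,t) \<in> E"
    and ag: "\<forall>(j,s)\<in>E. s \<le> t - 1 \<longrightarrow> \<omega> (j,s) = \<omega>' (j,s)"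
  shows "x \<omega> i t = x \<omega>' i t"
proof -
  note h = conjunct2[OF F[unfolded PBP_feasible_def]]
  note h2 = bspec[OF bspec[OF bspec[OF h a(1)] a(2)] a(3)]
  show ?thesis using mp[OF h2[unfolded prod.case] ag] .
qed

lemma upper_step:
  assumes fin: "finite E" and Et: "\<forall>(i,t)\<in>E. 1 \<le> t"
    and p: "\<forall>(i,t)\<in>E. 0 \<le> p i t \<and> p i t \<le> 1"
    and x: "PBP_feasible I n E c x"
  shows "\<exists>y. LP_feasible I n E p c y \<and> LP_obj E p r y = PBP_obj E r p x"
proof -
  let ?M = "path_pmf E p"
  define y where "y i t = measure_pmf.expectation ?M (\<lambda>\<omega>. x \<omega> i t)" for i t
  have finM: "finite (set_pmf ?M)" by (rule finite_set_path_pmf[OF fin])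
  have supp: "\<omega> \<in> sample_paths E" if "\<omega> \<in> set_pmf ?M" for \<omega>
    using set_path_pmf_sub[OF fin] that by blast
  note feas1 = PBP_feasD1[OF x] PBP_feasD2[OF x] PBP_feasD3[OF x]
  note na = PBP_feasD4[OF x]
  have xind: "measure_pmf.expectation ?M (\<lambda>\<omega>. x \<omega> i t * ind (\<omega> (i,t))) = p i t * y i t"
    if it: "(i,t) \<in> E" for i t
    unfolding y_def
  proof (rule expect_ind[OF fin it])
    show "0 \<le> p i t" "p i t \<le> 1" using p it by auto
    fix \<omega> b assume om: "\<omega> \<in> sample_paths E"
    have om': "fun_upd \<omega> (i,t) b \<in> sample_paths E" using om it by (auto simp: sample_paths_def)
    have t1: "1 \<le> t" using Et it by auto
    have "\<forall>(j,s)\<in>E. s \<le> t - 1 \<longrightarrow> (fun_upd \<omega> (i,t) b) (j,s) = \<omega> (j,s)"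
      using t1 by auto
    then show "x (fun_upd \<omega> (i,t) b) i t = x \<omega> i t" by (rule na[OF om' om it])
  qed
  have finT: "finite {t. (i,t) \<in> E}" for i
    by (rule finite_subset[of _ "snd ` E"]) (use fin in \<open>force+\<close>)
  have finI: "finite {i. (i,t) \<in> E}" for t
    by (rule finite_subset[of _ "fst ` E"]) (use fin in \<open>force+\<close>)
  have L1: "\<forall>i\<in>I. (\<Sum>t\<in>{t. (i,t) \<in> E}. p i t * y i t) \<le> real (c i)"
  proof
    fix i assume i: "i \<in> I"
    have "(\<Sum>t\<in>{t. (i,t) \<in> E}. p i t * y i t)
       = (\<Sum>t\<in>{t. (i,t) \<in> E}. measure_pmf.expectation ?M (\<lambda>\<omega>. x \<omega> i t * ind (\<omega> (i,t))))"
      by (intro sum.cong refl) (simp add: xind)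
    also have "\<dots> = measure_pmf.expectation ?M (\<lambda>\<omega>. \<Sum>t\<in>{t. (i,t) \<in> E}. x \<omega> i t * ind (\<omega> (i,t)))"
      by (rule pmf_sum[OF finM, symmetric])
    also have "\<dots> \<le> real (c i)"
      by (rule pmf_const_le[OF finM]) (rule feas1(1)[OF supp i])
    finally show "(\<Sum>t\<in>{t. (i,t) \<in> E}. p i t * y i t) \<le> real (c i)" .
  qed
  have L2: "\<forall>t\<in>{1..n}. (\<Sum>i\<in>{i. (i,t) \<in> E}. y i t) \<le> 1"
  proof
    fix t assume t: "t \<in> {1..n}"
    have "(\<Sum>i\<in>{i. (i,t) \<in> E}. y i t) = measure_pmf.expectation ?M (\<lambda>\<omega>. \<Sum>i\<in>{i. (i,t) \<in> E}. x \<omega> i t)"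
      unfolding y_def by (rule pmf_sum[OF finM, symmetric])
    also have "\<dots> \<le> 1"
      by (rule pmf_const_le[OF finM]) (rule feas1(2)[OF supp t])
    finally show "(\<Sum>i\<in>{i. (i,t) \<in> E}. y i t) \<le> 1" .
  qed
  have L3: "\<forall>(i,t)\<in>E. 0 \<le> y i t \<and> y i t \<le> 1"
  proof (clarify)
    fix i t assume it: "(i,t) \<in> E"
    have "\<forall>\<omega>\<in>set_pmf ?M. 0 \<le> x \<omega> i t \<and> x \<omega> i t \<le> 1"
      using feas1(3)[OF supp it] by blast
    then show "0 \<le> y i t \<and> y i t \<le> 1" unfolding y_def
      using pmf_const_le[OF finM, of "\<lambda>\<omega>. x \<omega> i t" 1] pmf_const_ge[OF finM, of 0 "\<lambda>\<omega>. x \<omega> i t"]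
      by auto
  qed
  have obj: "LP_obj E p r y = PBP_obj E r p x"
  proof -
    have "PBP_obj E r p x = (\<Sum>e\<in>E. measure_pmf.expectation ?M
        (\<lambda>\<omega>. case e of (i,t) \<Rightarrow> r i * x \<omega> i t * ind (\<omega> (i,t))))"
      unfolding PBP_obj_def by (rule pmf_sum[OF finM])
    also have "\<dots> = (\<Sum>e\<in>E. case e of (i,t) \<Rightarrow> p i t * r i * y i t)"
    proof (rule sum.cong[OF refl])
      fix e assume e: "e \<in> E"
      obtain i t where et: "e = (i,t)" by (cases e)
      have it: "(i,t) \<in> E" using e et by simp
      have "measure_pmf.expectation ?M (\<lambda>\<omega>. r i * x \<omega> i t * ind (\<omega> (i,t)))
          = r i * measure_pmf.expectation ?M (\<lambda>\<omega>. x \<omega> i t * ind (\<omega> (i,t)))"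
        by (simp add: mult.assoc)
      then show "measure_pmf.expectation ?M (\<lambda>\<omega>. case e of (i,t) \<Rightarrow> r i * x \<omega> i t * ind (\<omega> (i,t)))
          = (case e of (i,t) \<Rightarrow> p i t * r i * y i t)"
        using xind[OF it] et by simp
    qed
    finally show ?thesis unfolding LP_obj_def by simp
  qed
  have "LP_feasible I n E p c y" unfolding LP_feasible_def using L1 L2 L3 by (intro conjI)
  then show ?thesis using obj by blast
qed

lemma min_tele: "(y::real) \<ge> 0 \<Longrightarrow> min c s + max 0 (min y (c - s)) = min c (s + y)"
  by (auto simp: min_def max_def)
lemma min_quad: "(d::real) > 0 \<Longrightarrow> min (mu + d) S \<ge> S - (S - mu)^2 / (4*d)"
proof -
  assume d: "d > 0"
  have "(S - mu)^2 / (4*d) \<ge> S - (mu + d)"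
  proof -
    have "(S - mu)^2 - 4*d*(S - (mu+d)) = (S - mu - 2*d)^2" by (simp add: power2_eq_square algebra_simps)
    then have "4*d*(S - (mu+d)) \<le> (S - mu)^2" by (metis diff_ge_0_iff_ge zero_le_power2)
    then show ?thesis using d by (simp add: field_simps)
  qed
  moreover have "(S - mu)^2 / (4*d) \<ge> 0" using d by simp
  ultimately show ?thesis by (auto simp: min_def)
qed
lemma ln2_bound: "ln (2::real) \<ge> 25/64"
  using ln2_ge_two_thirds by linarith

definition Sfun :: "(nat \<Rightarrow> nat \<Rightarrow> real) \<Rightarrow> (nat \<times> nat \<Rightarrow> bool) \<Rightarrow> nat \<Rightarrow> nat \<Rightarrow> real" where
  "Sfun Y \<omega> i k = (\<Sum>s\<in>{1..k}. Y i s * ind (\<omega> (i,s)))"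

lemma ind_sq: "ind b * ind b = ind b" by (simp add: ind_def)
lemma ind_ge0: "0 \<le> ind b" by (simp add: ind_def)
lemma ind_le1: "ind b \<le> 1" by (simp add: ind_def)

lemma expect_Yind:
  assumes fin: "finite E" and p: "0 \<le> p i s" "p i s \<le> 1" and Y0: "(i,s) \<notin> E \<Longrightarrow> Y i s = 0"
  shows "measure_pmf.expectation (path_pmf E p) (\<lambda>\<omega>. Y i s * ind (\<omega> (i,s))) = Y i s * p i s"
proof (cases "(i,s) \<in> E")
  case True
  have "measure_pmf.expectation (path_pmf E p) (\<lambda>\<omega>. Y i s * ind (\<omega> (i,s)))
      = p i s * measure_pmf.expectation (path_pmf E p) (\<lambda>_. Y i s)"
    by (rule expect_ind[where p=p, OF fin True p]) simp
  then show ?thesis by simp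
next
  case False
  then show ?thesis using Y0 by simp
qed

lemma expect_diag:
  assumes fin: "finite E" and p: "0 \<le> p i s" "p i s \<le> 1" and Y0: "(i,s) \<notin> E \<Longrightarrow> Y i s = 0"
  shows "measure_pmf.expectation (path_pmf E p) (\<lambda>\<omega>. (Y i s * ind (\<omega> (i,s))) * (Y i s * ind (\<omega> (i,s))))
     = Y i s * Y i s * p i s"
proof -
  have eq: "(\<lambda>\<omega>. (Y i s * ind (\<omega> (i,s))) * (Y i s * ind (\<omega> (i,s)))) = (\<lambda>\<omega>. (\<lambda>i s. Y i s * Y i s) i s * ind (\<omega> (i,s)))"
    by (rule ext) (simp add: ind_def)
  show ?thesis unfolding eq by (rule expect_Yind[where p=p and Y="\<lambda>i s. Y i s * Y i s", OF fin p]) (simp add: Y0)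
qed

lemma expect_offdiag:
  assumes fin: "finite E" and p: "\<forall>(i,t)\<in>E. 0 \<le> p i t \<and> p i t \<le> 1"
    and Y0: "\<And>s. (i,s) \<notin> E \<Longrightarrow> Y i s = 0" and st: "s \<noteq> t"
  shows "measure_pmf.expectation (path_pmf E p) (\<lambda>\<omega>. (Y i s * ind (\<omega> (i,s))) * (Y i t * ind (\<omega> (i,t))))
     = (Y i s * p i s) * (Y i t * p i t)"
proof (cases "(i,t) \<in> E")
  case True
  have pt: "0 \<le> p i t" "p i t \<le> 1" using p True by auto
  have eq: "(\<lambda>\<omega>. (Y i s * ind (\<omega> (i,s))) * (Y i t * ind (\<omega> (i,t))))
      = (\<lambda>\<omega>. (Y i t * (Y i s * ind (\<omega> (i,s)))) * ind (\<omega> (i,t)))"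
    by (rule ext) (simp add: ac_simps)
  have "measure_pmf.expectation (path_pmf E p) (\<lambda>\<omega>. (Y i t * (Y i s * ind (\<omega> (i,s)))) * ind (\<omega> (i,t)))
      = p i t * measure_pmf.expectation (path_pmf E p) (\<lambda>\<omega>. Y i t * (Y i s * ind (\<omega> (i,s))))"
    by (rule expect_ind[where p=p, OF fin True pt]) (use st in simp)
  also have "measure_pmf.expectation (path_pmf E p) (\<lambda>\<omega>. Y i t * (Y i s * ind (\<omega> (i,s))))
      = Y i t * (Y i s * p i s)"
  proof (cases "(i,s) \<in> E")
    case True
    have ps: "0 \<le> p i s" "p i s \<le> 1" using p True by auto
    show ?thesis using expect_Yind[where p=p and Y=Y, OF fin ps] Y0 by simp
  next
    case False
    then show ?thesis using Y0 by simp
  qed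
  finally show ?thesis unfolding eq by simp
next
  case False
  then show ?thesis using Y0 by simp
qed


lemma expect_min_bound:
  assumes fin: "finite E" and p: "\<forall>(i,t)\<in>E. 0 \<le> p i t \<and> p i t \<le> 1"
    and Yb: "\<And>s. 0 \<le> Y i s \<and> Y i s \<le> 1" and Y0: "\<And>s. (i,s) \<notin> E \<Longrightarrow> Y i s = 0"
    and mu: "mu = (\<Sum>s\<in>{1..k}. Y i s * p i s)" and d: "mu < cc"
  shows "mu - mu / (4 * (cc - mu)) \<le> measure_pmf.expectation (path_pmf E p) (\<lambda>\<omega>. min cc (Sfun Y \<omega> i k))"
proof -
  let ?M = "path_pmf E p"
  let ?A = "{1..k}"
  define a where "a s \<omega> = Y i s * ind (\<omega> (i,s))" for s \<omega>
  define b where "b s = Y i s * p i s" for s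
  define S where "S \<omega> = Sfun Y \<omega> i k" for \<omega>
  have finM: "finite (set_pmf ?M)" by (rule finite_set_path_pmf[OF fin])
  note int = integrable_measure_pmf_finite[OF finM]
  have S_def': "S \<omega> = (\<Sum>s\<in>?A. a s \<omega>)" for \<omega> unfolding S_def Sfun_def a_def ..
  have Ea: "measure_pmf.expectation ?M (a s) = b s" for s
  proof (cases "(i,s) \<in> E")
    case True
    then have "0 \<le> p i s" "p i s \<le> 1" using p by auto
    then show ?thesis unfolding a_def b_def using expect_Yind[where p=p and Y=Y, OF fin] Y0 by blast
  next
    case False then show ?thesis unfolding a_def b_def using Y0 by simp
  qed
  have b0: "0 \<le> b s" for s
  proof (cases "(i,s) \<in> E")
    case True then show ?thesis using p Yb unfolding b_def by auto
  next
    case False then show ?thesis using Y0 unfolding b_def by simp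
  qed
  have Eab: "measure_pmf.expectation ?M (\<lambda>\<omega>. a s \<omega> * a t \<omega>) \<le> b s * b t + (if s = t then b s else 0)" for s t
  proof (cases "s = t")
    case False
    have "measure_pmf.expectation ?M (\<lambda>\<omega>. a s \<omega> * a t \<omega>) = b s * b t"
      unfolding a_def b_def by (rule expect_offdiag[where p=p and Y=Y and i=i, OF fin p Y0 False])
    then show ?thesis using False by simp
  next
    case True
    show ?thesis
    proof (cases "(i,s) \<in> E")
      case sE: True
      then have ps: "0 \<le> p i s" "p i s \<le> 1" using p by auto
      have "measure_pmf.expectation ?M (\<lambda>\<omega>. a s \<omega> * a t \<omega>) = Y i s * Y i s * p i s"
        unfolding a_def True by (rule expect_diag[where p=p and Y=Y, OF fin ps[unfolded True]]) (use Y0 in simp)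
      also have "\<dots> \<le> Y i s * p i s"
        using Yb[of s] ps by (simp add: mult_right_le_one_le mult_le_one mult.assoc mult_left_le_one_le mult_nonneg_nonneg)
      also have "\<dots> \<le> b s * b t + (if s = t then b s else 0)"
        using True b0[of s] unfolding b_def by simp
      finally show ?thesis .
    next
      case False
      then show ?thesis using True Y0 b0 unfolding a_def b_def by simp
    qed
  qed
  have ES: "measure_pmf.expectation ?M S = mu"
    unfolding S_def' mu by (subst pmf_sum[OF finM]) (simp add: Ea b_def)
  have "measure_pmf.expectation ?M (\<lambda>\<omega>. (S \<omega>)^2) = measure_pmf.expectation ?M (\<lambda>\<omega>. \<Sum>s\<in>?A. \<Sum>t\<in>?A. a s \<omega> * a t \<omega>)"
    unfolding S_def' by (simp add: power2_eq_square sum_product)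
  also have "\<dots> = (\<Sum>s\<in>?A. \<Sum>t\<in>?A. measure_pmf.expectation ?M (\<lambda>\<omega>. a s \<omega> * a t \<omega>))"
    by (simp add: pmf_sum[OF finM])
  also have "\<dots> \<le> (\<Sum>s\<in>?A. \<Sum>t\<in>?A. b s * b t + (if s = t then b s else 0))"
    by (intro sum_mono Eab)
  also have "\<dots> = mu^2 + mu"
    by (simp add: sum.distrib mu b_def power2_eq_square sum_product)
  finally have ES2: "measure_pmf.expectation ?M (\<lambda>\<omega>. (S \<omega>)^2) \<le> mu^2 + mu" .
  have Var: "measure_pmf.expectation ?M (\<lambda>\<omega>. (S \<omega> - mu)^2) \<le> mu"
  proof -
    have "(\<lambda>\<omega>. (S \<omega> - mu)^2) = (\<lambda>\<omega>. (S \<omega>)^2 - 2 * mu * S \<omega> + mu^2)"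
      by (rule ext) (simp add: power2_diff algebra_simps)
    then have "measure_pmf.expectation ?M (\<lambda>\<omega>. (S \<omega> - mu)^2)
        = measure_pmf.expectation ?M (\<lambda>\<omega>. (S \<omega>)^2) - 2 * mu * measure_pmf.expectation ?M S + mu^2"
      by (simp add: int)
    then show ?thesis using ES ES2 by (simp add: power2_eq_square)
  qed
  define dd where "dd = cc - mu"
  have dd: "dd > 0" using d by (simp add: dd_def)
  have "measure_pmf.expectation ?M (\<lambda>\<omega>. S \<omega> - (S \<omega> - mu)^2 / (4*dd)) \<le> measure_pmf.expectation ?M (\<lambda>\<omega>. min cc (S \<omega>))"
  proof (rule pmf_mono[OF finM])
    fix x show "S x - (S x - mu)^2 / (4*dd) \<le> min cc (S x)"
      using min_quad[OF dd, where mu=mu and S="S x"] by (simp add: dd_def)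
  qed
  moreover have "measure_pmf.expectation ?M (\<lambda>\<omega>. S \<omega> - (S \<omega> - mu)^2 / (4*dd))
      = mu - measure_pmf.expectation ?M (\<lambda>\<omega>. (S \<omega> - mu)^2) / (4*dd)"
    using ES by (simp add: int)
  moreover have "measure_pmf.expectation ?M (\<lambda>\<omega>. (S \<omega> - mu)^2) / (4*dd) \<le> mu / (4*dd)"
    using Var dd by (simp add: divide_right_mono)
  ultimately show ?thesis unfolding S_def dd_def by linarith
qed


lemma LP_feasD1: "LP_feasible I n E p c y \<Longrightarrow> i \<in> I \<Longrightarrow>
   (\<Sum>t\<in>{t. (i,t) \<in> E}. p i t * y i t) \<le> real (c i)"
  unfolding LP_feasible_def
  apply (drule conjunct1)
  apply (drule bspec, assumption)
  apply assumption
  done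
lemma LP_feasD2: "LP_feasible I n E p c y \<Longrightarrow> t \<in> {1..n} \<Longrightarrow>
   (\<Sum>i\<in>{i. (i,t) \<in> E}. y i t) \<le> 1"
  unfolding LP_feasible_def
  apply (drule conjunct2)
  apply (drule conjunct1)
  apply (drule bspec, assumption)
  apply assumption
  done
lemma LP_feasD3: "LP_feasible I n E p c y \<Longrightarrow> (i,t) \<in> E \<Longrightarrow> 0 \<le> y i t \<and> y i t \<le> 1"
  unfolding LP_feasible_def
  apply (drule conjunct2)
  apply (drule conjunct2)
  apply (drule bspec, assumption)
  apply simp
  done

definition pol :: "(nat \<Rightarrow> nat \<Rightarrow> real) \<Rightarrow> (nat \<Rightarrow> nat) \<Rightarrow> (nat \<times> nat \<Rightarrow> bool) \<Rightarrow> nat \<Rightarrow> nat \<Rightarrow> real" where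
  "pol Y c \<omega> i t = max 0 (min (Y i t) (real (c i) - Sfun Y \<omega> i (t - 1)))"

lemma pol_tele:
  assumes Y: "\<And>s. 0 \<le> Y i s"
  shows "(\<Sum>t\<in>{1..k}. pol Y c \<omega> i t * ind (\<omega> (i,t))) = min (real (c i)) (Sfun Y \<omega> i k)"
proof (induction k)
  case 0
  then show ?case by (simp add: Sfun_def)
next
  case (Suc k)
  have S: "Sfun Y \<omega> i (Suc k) = Sfun Y \<omega> i k + Y i (Suc k) * ind (\<omega> (i, Suc k))"
    by (simp add: Sfun_def)
  have "(\<Sum>t\<in>{1..Suc k}. pol Y c \<omega> i t * ind (\<omega> (i,t)))
      = min (real (c i)) (Sfun Y \<omega> i k) + pol Y c \<omega> i (Suc k) * ind (\<omega> (i, Suc k))"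
    using Suc by simp
  also have "\<dots> = min (real (c i)) (Sfun Y \<omega> i (Suc k))"
  proof (cases "\<omega> (i, Suc k)")
    case True
    then show ?thesis unfolding S pol_def using min_tele[OF Y[of "Suc k"]] by (simp add: ind_def)
  next
    case False
    then show ?thesis unfolding S by (simp add: ind_def)
  qed
  finally show ?case .
qed

lemma pol_bounds: "0 \<le> Y i t \<Longrightarrow> 0 \<le> pol Y c \<omega> i t \<and> pol Y c \<omega> i t \<le> Y i t"
  unfolding pol_def by simp


lemma lower_step:
  assumes finI: "finite I" and EI: "E \<subseteq> I \<times> {1..n}"
    and p: "\<forall>(i,t)\<in>E. 0 \<le> p i t \<and> p i t \<le> 1"
    and r: "\<forall>i\<in>I. r i > 0"
    and m2: "2 \<le> m" and cm: "\<forall>i\<in>I. m \<le> real (c i)"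
    and y: "LP_feasible I n E p c y"
  shows "\<exists>x. PBP_feasible I n E c x \<and> (1 - 5 / (4 * sqrt m)) * LP_obj E p r y \<le> PBP_obj E r p x"
proof -
  have fin: "finite E" by (rule finite_subset[OF EI]) (use finI in simp)
  let ?M = "path_pmf E p"
  have finM: "finite (set_pmf ?M)" by (rule finite_set_path_pmf[OF fin])
  define q where "q = 1 / sqrt m"
  have sm: "sqrt m \<ge> 1" using m2 by simp
  have sm2: "sqrt m > 1" using m2 by (simp add: real_less_rsqrt)
  have q0: "0 < q" "q < 1" using sm2 by (auto simp: q_def)
  have qm: "q * m * q = 1" using m2 by (simp add: q_def power2_eq_square[symmetric])
  define aa where "aa = 1 - q"
  have aa: "0 \<le> aa" "aa \<le> 1" using q0 by (auto simp: aa_def)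
  define Y where "Y i t = (if (i,t) \<in> E then aa * y i t else 0)" for i t
  define x where "x = pol Y c"
  have yb: "0 \<le> y i t \<and> y i t \<le> 1" if "(i,t) \<in> E" for i t using LP_feasD3[OF y that] .
  have Yb: "0 \<le> Y i t \<and> Y i t \<le> 1" for i t
    using yb[of i t] aa by (auto simp: Y_def mult_le_one)
  have Y0: "(i,t) \<notin> E \<Longrightarrow> Y i t = 0" for i t by (simp add: Y_def)
  have Yle: "Y i t \<le> y i t" if "(i,t) \<in> E" for i t
    using yb[OF that] aa that by (simp add: Y_def mult_left_le_one_le)
  have xb: "0 \<le> x \<omega> i t \<and> x \<omega> i t \<le> Y i t" for \<omega> i t
    unfolding x_def using pol_bounds Yb by blast
  have x0: "x \<omega> i t = 0" if "(i,t) \<notin> E" for \<omega> i t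
    using xb[of \<omega> i t] Y0[OF that] by simp
  have tele: "(\<Sum>t\<in>{1..n}. x \<omega> i t * ind (\<omega> (i,t))) = min (real (c i)) (Sfun Y \<omega> i n)" for \<omega> i
    unfolding x_def by (rule pol_tele) (use Yb in blast)
  have Tsub: "{t. (i,t) \<in> E} \<subseteq> {1..n}" for i using EI by auto
  have sumT: "(\<Sum>t\<in>{t. (i,t) \<in> E}. f t) = (\<Sum>t\<in>{1..n}. f t)"
    if "\<And>t. (i,t) \<notin> E \<Longrightarrow> f t = 0" for i and f :: "nat \<Rightarrow> real"
    by (rule sum.mono_neutral_left) (use Tsub that in auto)
  have P1: "\<forall>\<omega>\<in>sample_paths E.
        (\<forall>i\<in>I. (\<Sum>t\<in>{t. (i,t) \<in> E}. x \<omega> i t * ind (\<omega> (i,t))) \<le> real (c i)) \<and>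
        (\<forall>t\<in>{1..n}. (\<Sum>i\<in>{i. (i,t) \<in> E}. x \<omega> i t) \<le> 1) \<and>
        (\<forall>(i,t)\<in>E. 0 \<le> x \<omega> i t \<and> x \<omega> i t \<le> 1)"
  proof (intro ballI conjI)
    fix \<omega> i assume "i \<in> I"
    have "(\<Sum>t\<in>{t. (i,t) \<in> E}. x \<omega> i t * ind (\<omega> (i,t))) = (\<Sum>t\<in>{1..n}. x \<omega> i t * ind (\<omega> (i,t)))"
      by (rule sumT) (simp add: x0)
    also have "\<dots> \<le> real (c i)" unfolding tele by simp
    finally show "(\<Sum>t\<in>{t. (i,t) \<in> E}. x \<omega> i t * ind (\<omega> (i,t))) \<le> real (c i)" .
  next
    fix \<omega> t assume t: "t \<in> {1..n}"
    have "(\<Sum>i\<in>{i. (i,t) \<in> E}. x \<omega> i t) \<le> (\<Sum>i\<in>{i. (i,t) \<in> E}. y i t)"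
      by (rule sum_mono) (use xb Yle order_trans in blast)
    also have "\<dots> \<le> 1" by (rule LP_feasD2[OF y t])
    finally show "(\<Sum>i\<in>{i. (i,t) \<in> E}. x \<omega> i t) \<le> 1" .
  next
    fix \<omega> e assume e: "e \<in> E"
    obtain i t where et: "e = (i,t)" by (cases e)
    have "0 \<le> x \<omega> i t \<and> x \<omega> i t \<le> 1" using xb[of \<omega> i t] Yb[of i t] by linarith
    then show "case e of (i,t) \<Rightarrow> 0 \<le> x \<omega> i t \<and> x \<omega> i t \<le> 1" using et by simp
  qed
  have P2: "\<forall>\<omega>\<in>sample_paths E. \<forall>\<omega>'\<in>sample_paths E. \<forall>(i,t)\<in>E.
        (\<forall>(j,s)\<in>E. s \<le> t - 1 \<longrightarrow> \<omega> (j,s) = \<omega>' (j,s)) \<longrightarrow> x \<omega> i t = x \<omega>' i t"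
  proof (intro ballI)
    fix \<omega> \<omega>' e assume e: "e \<in> E"
    obtain i t where et: "e = (i,t)" by (cases e)
    have "x \<omega> i t = x \<omega>' i t" if ag: "\<forall>(j,s)\<in>E. s \<le> t - 1 \<longrightarrow> \<omega> (j,s) = \<omega>' (j,s)"
    proof -
      have "Sfun Y \<omega> i (t - 1) = Sfun Y \<omega>' i (t - 1)"
        unfolding Sfun_def
      proof (rule sum.cong[OF refl])
        fix s assume s: "s \<in> {1..t - 1}"
        show "Y i s * ind (\<omega> (i,s)) = Y i s * ind (\<omega>' (i,s))"
        proof (cases "(i,s) \<in> E")
          case True
          have "\<omega> (i,s) = \<omega>' (i,s)" using bspec[OF ag True] s by simp
          then show ?thesis by simp
        next
          case False then show ?thesis by (simp add: Y0)
        qed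
      qed
      then show ?thesis unfolding x_def pol_def by simp
    qed
    then show "case e of (i,t) \<Rightarrow> (\<forall>(j,s)\<in>E. s \<le> t - 1 \<longrightarrow> \<omega> (j,s) = \<omega>' (j,s)) \<longrightarrow> x \<omega> i t = x \<omega>' i t"
      using et by simp
  qed
  have feas: "PBP_feasible I n E c x" unfolding PBP_feasible_def using P1 P2 by (rule conjI)
  have pw: "(\<Sum>(i,t)\<in>E. r i * x \<omega> i t * ind (\<omega> (i,t))) = (\<Sum>i\<in>I. r i * min (real (c i)) (Sfun Y \<omega> i n))" for \<omega>
  proof -
    have "(\<Sum>(i,t)\<in>E. r i * x \<omega> i t * ind (\<omega> (i,t))) = (\<Sum>(i,t)\<in>I \<times> {1..n}. r i * x \<omega> i t * ind (\<omega> (i,t)))"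
      by (rule sum.mono_neutral_left) (use finI EI x0 in auto)
    also have "\<dots> = (\<Sum>i\<in>I. \<Sum>t\<in>{1..n}. r i * x \<omega> i t * ind (\<omega> (i,t)))"
      by (rule sum.cartesian_product[symmetric])
    also have "\<dots> = (\<Sum>i\<in>I. r i * (\<Sum>t\<in>{1..n}. x \<omega> i t * ind (\<omega> (i,t))))"
      by (simp add: sum_distrib_left mult.assoc)
    also have "\<dots> = (\<Sum>i\<in>I. r i * min (real (c i)) (Sfun Y \<omega> i n))" by (simp only: tele)
    finally show ?thesis .
  qed
  have objx: "PBP_obj E r p x = (\<Sum>i\<in>I. r i * measure_pmf.expectation ?M (\<lambda>\<omega>. min (real (c i)) (Sfun Y \<omega> i n)))"
    unfolding PBP_obj_def pw by (simp add: pmf_sum[OF finM])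
  define L where "L i = (\<Sum>t\<in>{t. (i,t) \<in> E}. p i t * y i t)" for i
  have L0: "0 \<le> L i" for i unfolding L_def using p yb by (intro sum_nonneg) auto
  have objy: "LP_obj E p r y = (\<Sum>i\<in>I. r i * L i)"
  proof -
    have finT: "finite {t. (i,t) \<in> E}" for i by (rule finite_subset[OF Tsub]) simp
    have ES: "E = Sigma I (\<lambda>i. {t. (i,t) \<in> E})" using EI by auto
    have "LP_obj E p r y = (\<Sum>(i,t)\<in>Sigma I (\<lambda>i. {t. (i,t) \<in> E}). p i t * r i * y i t)"
      unfolding LP_obj_def using ES by simp
    also have "\<dots> = (\<Sum>i\<in>I. \<Sum>t\<in>{t. (i,t) \<in> E}. p i t * r i * y i t)"
      by (rule sum.Sigma[symmetric]) (use finI finT in auto)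
    also have "\<dots> = (\<Sum>i\<in>I. r i * L i)"
      unfolding L_def by (simp add: sum_distrib_left ac_simps)
    finally show ?thesis .
  qed
  have per: "(1 - 5 / (4 * sqrt m)) * L i \<le> measure_pmf.expectation ?M (\<lambda>\<omega>. min (real (c i)) (Sfun Y \<omega> i n))"
    if i: "i \<in> I" for i
  proof -
    define mu where "mu = (\<Sum>s\<in>{1..n}. Y i s * p i s)"
    have mu_eq: "mu = aa * L i"
    proof -
      have "mu = (\<Sum>s\<in>{s. (i,s) \<in> E}. Y i s * p i s)"
        unfolding mu_def by (rule sumT[symmetric]) (simp add: Y0)
      also have "\<dots> = (\<Sum>s\<in>{s. (i,s) \<in> E}. aa * (p i s * y i s))"
        by (rule sum.cong) (auto simp: Y_def)
      finally show ?thesis unfolding L_def by (simp add: sum_distrib_left)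
    qed
    have Lc: "L i \<le> real (c i)" unfolding L_def by (rule LP_feasD1[OF y i])
    have cmi: "m \<le> real (c i)" using cm i by auto
    have gap: "q * m \<le> real (c i) - mu"
    proof -
      have "mu \<le> aa * real (c i)" unfolding mu_eq using Lc aa by (simp add: mult_left_mono)
      then have "real (c i) - mu \<ge> q * real (c i)" by (simp add: aa_def algebra_simps)
      moreover have "q * m \<le> q * real (c i)" using cmi q0 by simp
      ultimately show ?thesis by linarith
    qed
    have qmpos: "q * m > 0" using q0 m2 by simp
    have mu0: "0 \<le> mu" unfolding mu_eq using aa L0 by simp
    have bound: "mu - mu / (4 * (real (c i) - mu)) \<le> measure_pmf.expectation ?M (\<lambda>\<omega>. min (real (c i)) (Sfun Y \<omega> i n))"
      by (rule expect_min_bound[where p=p and Y=Y and i=i and k=n, OF fin p _ Y0 mu_def]) (use Yb gap qmpos in auto)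
    have "mu / (4 * (real (c i) - mu)) \<le> mu / (4 * (q * m))"
      using gap qmpos mu0 by (intro divide_left_mono) auto
    also have "mu / (4 * (q * m)) = mu * q / 4"
    proof -
      have "1 / (q * m) = (q * m * q) / (q * m)" using qm by simp
      also have "\<dots> = q" using qmpos m2 by simp
      finally have h: "1 / (q * m) = q" .
      have "mu / (4 * (q * m)) = (mu / 4) * (1 / (q * m))" by simp
      then show ?thesis unfolding h by simp
    qed
    finally have "mu - mu * q / 4 \<le> measure_pmf.expectation ?M (\<lambda>\<omega>. min (real (c i)) (Sfun Y \<omega> i n))"
      using bound by linarith
    moreover have "(1 - 5 / (4 * sqrt m)) * L i \<le> mu - mu * q / 4"
    proof -
      have e5: "5 / (4 * sqrt m) = 5 * q / 4" by (simp add: q_def)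
      have "mu - mu * q / 4 = (1 - q) * (1 - q / 4) * L i" unfolding mu_eq aa_def by (simp add: algebra_simps)
      moreover have "(1 - 5 * q / 4) * L i \<le> (1 - q) * (1 - q / 4) * L i"
        using L0[of i] q0 by (intro mult_right_mono) (auto simp: algebra_simps)
      ultimately show ?thesis unfolding e5 by simp
    qed
    ultimately show ?thesis by linarith
  qed
  have "(1 - 5 / (4 * sqrt m)) * LP_obj E p r y = (\<Sum>i\<in>I. r i * ((1 - 5 / (4 * sqrt m)) * L i))"
    unfolding objy by (simp add: sum_distrib_left sum_distrib_right ac_simps)
  also have "\<dots> \<le> PBP_obj E r p x"
    unfolding objx by (intro sum_mono mult_left_mono per) (use r in auto)
  finally show ?thesis using feas by blast
qed


lemma delta_bound:
  assumes m2: "2 \<le> (m::real)"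
  shows "5 / (4 * sqrt m) \<le> 2 * sqrt (ln m / m)"
proof -
  have "ln 2 \<le> ln m" using m2 by simp
  then have l: "(5/8)^2 \<le> ln m" using ln2_bound by (simp add: power2_eq_square)
  have "5/8 \<le> sqrt (ln m)" by (rule real_le_rsqrt[OF l])
  moreover have sm: "sqrt m > 0" using m2 by simp
  ultimately have "5 / (4 * sqrt m) \<le> 2 * sqrt (ln m) / sqrt m"
    by (simp add: field_simps)
  also have "\<dots> = 2 * sqrt (ln m / m)" by (simp add: real_sqrt_divide)
  finally show ?thesis .
qed

theorem theorem3:
  shows "\<exists>C>0. \<forall>(I::nat set) (n::nat) (E::(nat \<times> nat) set) (r::nat \<Rightarrow> real) (c::nat \<Rightarrow> nat)
            (p::nat \<Rightarrow> nat \<Rightarrow> real).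
     finite I \<and> I \<noteq> {} \<and> E \<subseteq> I \<times> {1..n} \<and>
     (\<forall>i\<in>I. r i > 0) \<and> (\<forall>i\<in>I. c i \<ge> 1) \<and>
     (\<forall>(i,t)\<in>E. 0 \<le> p i t \<and> p i t \<le> 1) \<and>
     Min (c ` I) \<ge> 2 \<longrightarrow>
       OPT_LP I n E r c p * (1 - C * sqrt (ln (real (Min (c ` I))) / real (Min (c ` I))))
         \<le> OPT_PBP I n E r c p
       \<and> OPT_PBP I n E r c p \<le> OPT_LP I n E r c p"
proof (intro exI[of _ 2] conjI allI impI)
  show "(0::real) < 2" by simp
  fix I :: "nat set" and n :: nat and E :: "(nat \<times> nat) set" and r :: "nat \<Rightarrow> real"
    and c :: "nat \<Rightarrow> nat" and p :: "nat \<Rightarrow> nat \<Rightarrow> real"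
  assume H: "finite I \<and> I \<noteq> {} \<and> E \<subseteq> I \<times> {1..n} \<and>
     (\<forall>i\<in>I. r i > 0) \<and> (\<forall>i\<in>I. c i \<ge> 1) \<and>
     (\<forall>(i,t)\<in>E. 0 \<le> p i t \<and> p i t \<le> 1) \<and> Min (c ` I) \<ge> 2"
  have finI: "finite I" and Ine: "I \<noteq> {}" and EI: "E \<subseteq> I \<times> {1..n}" and r: "\<forall>i\<in>I. r i > 0"
    and p: "\<forall>(i,t)\<in>E. 0 \<le> p i t \<and> p i t \<le> 1" and k2: "Min (c ` I) \<ge> 2"
    using H by auto
  define m where "m = real (Min (c ` I))"
  have m2: "2 \<le> m" using k2 unfolding m_def by simp
  have cm: "\<forall>i\<in>I. m \<le> real (c i)" unfolding m_def using finI by simp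
  have fin: "finite E" by (rule finite_subset[OF EI]) (use finI in simp)
  have Et: "\<forall>(i,t)\<in>E. 1 \<le> t" using EI by auto
  let ?LS = "LP_obj E p r ` {y. LP_feasible I n E p c y}"
  let ?PS = "PBP_obj E r p ` {x. PBP_feasible I n E c x}"
  have y0: "LP_feasible I n E p c (\<lambda>_ _. 0)" by (simp add: LP_feasible_def)
  have x0: "PBP_feasible I n E c (\<lambda>_ _ _. 0)" by (simp add: PBP_feasible_def)
  have LSne: "?LS \<noteq> {}" using y0 by blast
  have PSne: "?PS \<noteq> {}" using x0 by blast
  have LPbdd: "LP_obj E p r y \<le> (\<Sum>(i,t)\<in>E. \<bar>p i t * r i\<bar>)" if "LP_feasible I n E p c y" for y
    unfolding LP_obj_def
  proof (rule sum_mono)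
    fix e assume e: "e \<in> E"
    obtain i t where et: "e = (i,t)" by (cases e)
    have yb: "0 \<le> y i t \<and> y i t \<le> 1" using LP_feasD3[OF that] e et by simp
    have "p i t * r i * y i t \<le> \<bar>p i t * r i\<bar> * y i t" using yb by (intro mult_right_mono) auto
    also have "\<dots> \<le> \<bar>p i t * r i\<bar>" using yb by (simp add: mult_left_le)
    finally show "(case e of (i,t) \<Rightarrow> p i t * r i * y i t) \<le> (case e of (i,t) \<Rightarrow> \<bar>p i t * r i\<bar>)"
      using et by simp
  qed
  have LSbdd: "bdd_above ?LS" unfolding bdd_above_def using LPbdd by blast
  have LP_nonneg: "0 \<le> LP_obj E p r y" if "LP_feasible I n E p c y" for y
    unfolding LP_obj_def
  proof (rule sum_nonneg)
    fix e assume e: "e \<in> E"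
    obtain i t where et: "e = (i,t)" by (cases e)
    have "0 \<le> y i t" using LP_feasD3[OF that] e et by simp
    moreover have "0 \<le> p i t" using p e et by auto
    moreover have "0 < r i" using r EI e et by auto
    ultimately show "0 \<le> (case e of (i,t) \<Rightarrow> p i t * r i * y i t)" using et by simp
  qed
  have PS_le: "PBP_obj E r p x \<le> OPT_LP I n E r c p" if xf: "PBP_feasible I n E c x" for x
  proof -
    obtain y where y: "LP_feasible I n E p c y" "LP_obj E p r y = PBP_obj E r p x"
      using upper_step[OF fin Et p xf, of r] by blast
    have "LP_obj E p r y \<in> ?LS" using y(1) by blast
    then have "LP_obj E p r y \<le> OPT_LP I n E r c p"
      unfolding OPT_LP_def using LSbdd by (rule cSup_upper)
    then show ?thesis using y by simp
  qed
  have PSbdd: "bdd_above ?PS" unfolding bdd_above_def using PS_le by blast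
  have upper: "OPT_PBP I n E r c p \<le> OPT_LP I n E r c p"
    unfolding OPT_PBP_def[of I n E r c p] by (rule cSup_least[OF PSne]) (use PS_le in auto)
  have PBP_ge: "PBP_obj E r p x \<le> OPT_PBP I n E r c p" if "PBP_feasible I n E c x" for x
  proof -
    have "PBP_obj E r p x \<in> ?PS" using that by blast
    then show ?thesis unfolding OPT_PBP_def using PSbdd by (rule cSup_upper)
  qed
  have OPT_LP0: "0 \<le> OPT_LP I n E r c p"
  proof -
    have "LP_obj E p r (\<lambda>_ _. 0) \<in> ?LS" using y0 by blast
    then have "LP_obj E p r (\<lambda>_ _. 0) \<le> OPT_LP I n E r c p"
      unfolding OPT_LP_def using LSbdd by (rule cSup_upper)
    then show ?thesis by (simp add: LP_obj_def)
  qed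
  have OPT_PBP0: "0 \<le> OPT_PBP I n E r c p"
    using PBP_ge[OF x0] by (simp add: PBP_obj_def)
  define del where "del = 2 * sqrt (ln m / m)"
  have dl: "5 / (4 * sqrt m) \<le> del" unfolding del_def by (rule delta_bound[OF m2])
  have key: "(1 - del) * LP_obj E p r y \<le> OPT_PBP I n E r c p" if y: "LP_feasible I n E p c y" for y
  proof -
    obtain x where x: "PBP_feasible I n E c x" "(1 - 5 / (4 * sqrt m)) * LP_obj E p r y \<le> PBP_obj E r p x"
      using lower_step[OF finI EI p r m2 cm y] by blast
    have "(1 - del) * LP_obj E p r y \<le> (1 - 5 / (4 * sqrt m)) * LP_obj E p r y"
      using dl LP_nonneg[OF y] by (intro mult_right_mono) auto
    also have "\<dots> \<le> OPT_PBP I n E r c p" using x PBP_ge[OF x(1)] by linarith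
    finally show ?thesis .
  qed
  have lower: "OPT_LP I n E r c p * (1 - del) \<le> OPT_PBP I n E r c p"
  proof (cases "1 - del \<le> 0")
    case True
    then have "OPT_LP I n E r c p * (1 - del) \<le> 0" using OPT_LP0 by (simp add: mult_nonneg_nonpos)
    then show ?thesis using OPT_PBP0 by linarith
  next
    case False
    then have pos: "0 < 1 - del" by simp
    have "OPT_LP I n E r c p \<le> OPT_PBP I n E r c p / (1 - del)"
      unfolding OPT_LP_def[of I n E r c p]
    proof (rule cSup_least[OF LSne])
      fix v assume "v \<in> ?LS"
      then obtain y where y: "LP_feasible I n E p c y" "v = LP_obj E p r y" by blast
      show "v \<le> OPT_PBP I n E r c p / (1 - del)"
        using key[OF y(1)] pos y(2) by (simp add: pos_le_divide_eq mult.commute)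
    qed
    then show ?thesis using pos by (simp add: pos_le_divide_eq)
  qed
  show "OPT_LP I n E r c p * (1 - 2 * sqrt (ln (real (Min (c ` I))) / real (Min (c ` I)))) \<le> OPT_PBP I n E r c p"
    using lower unfolding del_def m_def .
  show "OPT_PBP I n E r c p \<le> OPT_LP I n E r c p" by (rule upper)
qed

end
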